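(* Let $\Gamma\curvearrowright(X,\mu)$ be an essentially free, probability measure preserving, weakly mixing action. Then the commensurator of $\Gamma$ inside $\mathrm{Aut}(X,\mu)$ acts essentially freely on $(X,\mu)$: if $\Delta$ belongs to this commensurator and $x\cdot\Delta=x$ for all $x$ in a non-negligible subset of $X$, then $x\cdot\Delta=x$ for almost every $x\in X$.
   Context: $\mathrm{Aut}(X,\mu)$ is the group of measure preserving automorphisms modulo null sets, acting on the right, containing $\Gamma$. The commensurator consists of $\Delta$ with $\Gamma\cap\Delta\Gamma\Delta^{-1}$ of finite index in both $\Gamma$ and $\Delta\Gamma\Delta^{-1}$. *)

theory Defs
  imports "HOL-Probability.Probability" "HOL-Algebra.Coset"
begin

definition mp_map :: "'a measure \<Rightarrow> ('a \<Rightarrow> 'a) \<Rightarrow> bool" where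
  "mp_map M T \<longleftrightarrow> T \<in> M \<rightarrow>\<^sub>M M \<and> distr M M T = M"

text \<open>Elements of Aut(X,mu): measure preserving maps invertible modulo null sets.
  Two such maps represent the same element iff they agree almost everywhere.\<close>
definition aut :: "'a measure \<Rightarrow> ('a \<Rightarrow> 'a) \<Rightarrow> bool" where
  "aut M T \<longleftrightarrow> mp_map M T \<and>
     (\<exists>S. mp_map M S \<and> (AE x in M. S (T x) = x) \<and> (AE x in M. T (S x) = x))"

text \<open>A right action of the group Gamma on (X,mu) by measure preserving automorphisms,
  i.e. a homomorphism of Gamma into Aut(X,mu) (equalities modulo null sets);
  x . g is written  a g x, and x . (g h) = (x . g) . h.\<close>
definition pmp_right_action :: "'g monoid \<Rightarrow> 'a measure \<Rightarrow> ('g \<Rightarrow> 'a \<Rightarrow> 'a) \<Rightarrow> bool" where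
  "pmp_right_action \<Gamma> M a \<longleftrightarrow> group \<Gamma> \<and> prob_space M \<and>
     (\<forall>g\<in>carrier \<Gamma>. mp_map M (a g)) \<and>
     (AE x in M. a \<one>\<^bsub>\<Gamma>\<^esub> x = x) \<and>
     (\<forall>g\<in>carrier \<Gamma>. \<forall>h\<in>carrier \<Gamma>. AE x in M. a (g \<otimes>\<^bsub>\<Gamma>\<^esub> h) x = a h (a g x))"

definition essentially_free :: "'g monoid \<Rightarrow> 'a measure \<Rightarrow> ('g \<Rightarrow> 'a \<Rightarrow> 'a) \<Rightarrow> bool" where
  "essentially_free \<Gamma> M a \<longleftrightarrow> (\<forall>g\<in>carrier \<Gamma>. g \<noteq> \<one>\<^bsub>\<Gamma>\<^esub> \<longrightarrow> (AE x in M. a g x \<noteq> x))"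

definition ergodic :: "'g monoid \<Rightarrow> 'a measure \<Rightarrow> ('g \<Rightarrow> 'a \<Rightarrow> 'a) \<Rightarrow> bool" where
  "ergodic \<Gamma> M a \<longleftrightarrow> (\<forall>A\<in>sets M.
     (\<forall>g\<in>carrier \<Gamma>. AE x in M. (a g x \<in> A \<longleftrightarrow> x \<in> A)) \<longrightarrow>
       emeasure M A = 0 \<or> emeasure M A = 1)"

definition weakly_mixing :: "'g monoid \<Rightarrow> 'a measure \<Rightarrow> ('g \<Rightarrow> 'a \<Rightarrow> 'a) \<Rightarrow> bool" where
  "weakly_mixing \<Gamma> M a \<longleftrightarrow> ergodic \<Gamma> (M \<Otimes>\<^sub>M M) (\<lambda>g (x, y). (a g x, a g y))"

text \<open>For the automorphism D and
  g, h in Gamma, "g = D h D^-1" in Aut(X,mu) (right action convention) means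
  x.D.h = x.g.D for a.e. x.  The subgroup Gamma \<inter> D Gamma D^-1 of Gamma is comm_left,
  and its preimage in Gamma under the isomorphism h \<mapsto> D h D^-1 of Gamma onto
  D Gamma D^-1 is comm_right.\<close>
definition comm_left :: "'g monoid \<Rightarrow> 'a measure \<Rightarrow> ('g \<Rightarrow> 'a \<Rightarrow> 'a) \<Rightarrow> ('a \<Rightarrow> 'a) \<Rightarrow> 'g set" where
  "comm_left \<Gamma> M a D = {g \<in> carrier \<Gamma>. \<exists>h\<in>carrier \<Gamma>. AE x in M. a h (D x) = D (a g x)}"

definition comm_right :: "'g monoid \<Rightarrow> 'a measure \<Rightarrow> ('g \<Rightarrow> 'a \<Rightarrow> 'a) \<Rightarrow> ('a \<Rightarrow> 'a) \<Rightarrow> 'g set" where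
  "comm_right \<Gamma> M a D = {h \<in> carrier \<Gamma>. \<exists>g\<in>carrier \<Gamma>. AE x in M. a h (D x) = D (a g x)}"

definition in_commensurator :: "'g monoid \<Rightarrow> 'a measure \<Rightarrow> ('g \<Rightarrow> 'a \<Rightarrow> 'a) \<Rightarrow> ('a \<Rightarrow> 'a) \<Rightarrow> bool" where
  "in_commensurator \<Gamma> M a D \<longleftrightarrow> aut M D \<and>
     finite (rcosets\<^bsub>\<Gamma>\<^esub> (comm_left \<Gamma> M a D)) \<and>
     finite (rcosets\<^bsub>\<Gamma>\<^esub> (comm_right \<Gamma> M a D))"

end

theory Submission
  imports Defs
begin

lemma ae_mp:
  assumes "mp_map M T" "AE y in M. P y" shows "AE x in M. P (T x)"
proof -
  from assms(2) obtain N where N: "{y\<in>space M. \<not> P y} \<subseteq> N" "N \<in> null_sets M"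
    by (auto elim!: AE_E)
  have Tm: "T \<in> M \<rightarrow>\<^sub>M M" and d: "distr M M T = M" using assms(1) by (auto simp: mp_map_def)
  have Ns: "N \<in> sets M" using N by auto
  have "emeasure M (T -` N \<inter> space M) = emeasure (distr M M T) N" using Tm Ns by (simp add: emeasure_distr)
  then have "emeasure M (T -` N \<inter> space M) = 0" using d N by auto
  moreover have "T -` N \<inter> space M \<in> sets M" using Tm Ns by (rule measurable_sets)
  moreover have "{x\<in>space M. \<not> P (T x)} \<subseteq> T -` N \<inter> space M" using N(1) Tm by (auto dest: measurable_space)
  ultimately show ?thesis by (intro AE_I'[where N="T -` N \<inter> space M"]) auto
qed

lemma ae_fst:
  assumes "prob_space M" "AE x in M. P x" shows "AE z in M \<Otimes>\<^sub>M M. P (fst z)"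
proof -
  interpret prob_space M by fact
  from assms(2) obtain N where N: "{y\<in>space M. \<not> P y} \<subseteq> N" "N \<in> null_sets M"
    by (auto elim!: AE_E)
  have "N \<times> space M \<in> null_sets (M \<Otimes>\<^sub>M M)" using N by (intro times_in_null_sets1) auto
  moreover have "{z\<in>space (M \<Otimes>\<^sub>M M). \<not> P (fst z)} \<subseteq> N \<times> space M"
    using N(1) by (auto simp: space_pair_measure)
  ultimately show ?thesis by (intro AE_I') auto
qed

lemma ae_snd:
  assumes "prob_space M" "AE x in M. P x" shows "AE z in M \<Otimes>\<^sub>M M. P (snd z)"
proof -
  interpret prob_space M by fact
  from assms(2) obtain N where N: "{y\<in>space M. \<not> P y} \<subseteq> N" "N \<in> null_sets M"
    by (auto elim!: AE_E)
  have "space M \<times> N \<in> null_sets (M \<Otimes>\<^sub>M M)" using N by (intro times_in_null_sets2) auto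
  moreover have "{z\<in>space (M \<Otimes>\<^sub>M M). \<not> P (snd z)} \<subseteq> space M \<times> N"
    using N(1) by (auto simp: space_pair_measure)
  ultimately show ?thesis by (intro AE_I') auto
qed

locale LL =
  fixes \<Gamma> :: "'g monoid" and M :: "'a measure" and a :: "'g \<Rightarrow> 'a \<Rightarrow> 'a" and D :: "'a \<Rightarrow> 'a"
    and A :: "'a set"
  assumes act: "pmp_right_action \<Gamma> M a"
    and cnt: "countable (carrier \<Gamma>)"
    and fr: "essentially_free \<Gamma> M a"
    and wm: "weakly_mixing \<Gamma> M a"
    and com: "in_commensurator \<Gamma> M a D"
    and As: "A \<in> sets M" and Apos: "emeasure M A > 0"
    and Afix: "\<forall>x\<in>A. D x = x"
begin

lemma grp: "group \<Gamma>" using act by (simp add: pmp_right_action_def)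
lemma ps: "prob_space M" using act by (simp add: pmp_right_action_def)

sublocale G: group \<Gamma> by (rule grp)
sublocale P: prob_space M by (rule ps)

lemma amp: "g \<in> carrier \<Gamma> \<Longrightarrow> mp_map M (a g)" using act by (simp add: pmp_right_action_def)
lemma ameas: "g \<in> carrier \<Gamma> \<Longrightarrow> a g \<in> M \<rightarrow>\<^sub>M M" using amp by (simp add: mp_map_def)
lemma Dmp: "mp_map M D" using com by (simp add: in_commensurator_def aut_def)
lemma a1: "AE x in M. a \<one>\<^bsub>\<Gamma>\<^esub> x = x" using act by (simp add: pmp_right_action_def)
lemma acomp: "g \<in> carrier \<Gamma> \<Longrightarrow> h \<in> carrier \<Gamma> \<Longrightarrow> AE x in M. a (g \<otimes>\<^bsub>\<Gamma>\<^esub> h) x = a h (a g x)"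
  using act by (simp add: pmp_right_action_def)

lemma ainv1: "g \<in> carrier \<Gamma> \<Longrightarrow> AE x in M. a (inv\<^bsub>\<Gamma>\<^esub> g) (a g x) = x"
  using acomp[of g "inv\<^bsub>\<Gamma>\<^esub> g"] a1 by auto
lemma ainv2: "g \<in> carrier \<Gamma> \<Longrightarrow> AE x in M. a g (a (inv\<^bsub>\<Gamma>\<^esub> g) x) = x"
  using acomp[of "inv\<^bsub>\<Gamma>\<^esub> g" g] a1 by auto

definition rel :: "'g \<Rightarrow> 'g \<Rightarrow> bool" where
  "rel g h \<longleftrightarrow> (AE x in M. a h (D x) = D (a g x))"

lemma rel1: "rel \<one>\<^bsub>\<Gamma>\<^esub> \<one>\<^bsub>\<Gamma>\<^esub>"
  using ae_mp[OF Dmp a1] a1 unfolding rel_def by auto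

lemma relmult:
  assumes g1: "g1 \<in> carrier \<Gamma>" and h1: "h1 \<in> carrier \<Gamma>" and g2: "g2 \<in> carrier \<Gamma>" and h2: "h2 \<in> carrier \<Gamma>"
    and r1: "rel g1 h1" and r2: "rel g2 h2"
  shows "rel (g1 \<otimes>\<^bsub>\<Gamma>\<^esub> g2) (h1 \<otimes>\<^bsub>\<Gamma>\<^esub> h2)"
proof -
  have e1: "AE x in M. a (h1 \<otimes>\<^bsub>\<Gamma>\<^esub> h2) (D x) = a h2 (a h1 (D x))"
    using ae_mp[OF Dmp acomp[OF h1 h2]] .
  have e2: "AE x in M. a h1 (D x) = D (a g1 x)" using r1 by (simp add: rel_def)
  have e3: "AE x in M. a h2 (D (a g1 x)) = D (a g2 (a g1 x))"
    using ae_mp[OF amp[OF g1], of "\<lambda>y. a h2 (D y) = D (a g2 y)"] r2 by (simp add: rel_def)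
  have e4: "AE x in M. a (g1 \<otimes>\<^bsub>\<Gamma>\<^esub> g2) x = a g2 (a g1 x)" using acomp[OF g1 g2] .
  show ?thesis unfolding rel_def using e1 e2 e3 e4 by eventually_elim auto
qed

lemma relinv:
  assumes g: "g \<in> carrier \<Gamma>" and h: "h \<in> carrier \<Gamma>" and r: "rel g h"
  shows "rel (inv\<^bsub>\<Gamma>\<^esub> g) (inv\<^bsub>\<Gamma>\<^esub> h)"
proof -
  let ?k = "inv\<^bsub>\<Gamma>\<^esub> g"
  have k: "?k \<in> carrier \<Gamma>" using g by simp
  have e1: "AE x in M. a g (a ?k x) = x" using ainv2[OF g] .
  have e2: "AE x in M. a h (D (a ?k x)) = D (a g (a ?k x))"
    using ae_mp[OF amp[OF k], of "\<lambda>y. a h (D y) = D (a g y)"] r by (simp add: rel_def)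
  have e3: "AE x in M. a (inv\<^bsub>\<Gamma>\<^esub> h) (a h (D (a ?k x))) = D (a ?k x)"
    using ae_mp[OF amp[OF k], of "\<lambda>y. a (inv\<^bsub>\<Gamma>\<^esub> h) (a h (D y)) = D y"]
      ae_mp[OF Dmp ainv1[OF h]] by simp
  show ?thesis unfolding rel_def using e1 e2 e3 by eventually_elim auto
qed

definition G1 :: "'g set" where "G1 = {g \<in> carrier \<Gamma>. rel g g}"
definition G0 :: "'g set" where "G0 = {g \<in> carrier \<Gamma>. \<exists>h\<in>carrier \<Gamma>. rel g h}"

lemma G0_eq: "comm_left \<Gamma> M a D = G0"
  unfolding comm_left_def G0_def rel_def by simp

lemma G1_sub: "G1 \<subseteq> carrier \<Gamma>" and G0_sub: "G0 \<subseteq> carrier \<Gamma>"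
  by (auto simp: G1_def G0_def)
lemma G1_one: "\<one>\<^bsub>\<Gamma>\<^esub> \<in> G1" using rel1 by (simp add: G1_def)
lemma G0_one: "\<one>\<^bsub>\<Gamma>\<^esub> \<in> G0" using rel1 by (auto simp: G0_def)
lemma G1_mult: "g \<in> G1 \<Longrightarrow> k \<in> G1 \<Longrightarrow> g \<otimes>\<^bsub>\<Gamma>\<^esub> k \<in> G1"
  using relmult by (auto simp: G1_def)
lemma G1_inv: "g \<in> G1 \<Longrightarrow> inv\<^bsub>\<Gamma>\<^esub> g \<in> G1"
  using relinv by (auto simp: G1_def)
lemma G0_mult: "g \<in> G0 \<Longrightarrow> k \<in> G0 \<Longrightarrow> g \<otimes>\<^bsub>\<Gamma>\<^esub> k \<in> G0"
  unfolding G0_def using relmult by blast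
lemma G0_inv: "g \<in> G0 \<Longrightarrow> inv\<^bsub>\<Gamma>\<^esub> g \<in> G0"
  unfolding G0_def using relinv by blast
lemma G1_G0: "G1 \<subseteq> G0" by (auto simp: G1_def G0_def)

lemma shift_all:
  assumes "\<delta> \<in> carrier \<Gamma>"
  shows "(\<forall>\<gamma>\<in>carrier \<Gamma>. Q (\<delta> \<otimes>\<^bsub>\<Gamma>\<^esub> \<gamma>)) \<longleftrightarrow> (\<forall>\<gamma>\<in>carrier \<Gamma>. Q \<gamma>)"
proof
  assume H: "\<forall>\<gamma>\<in>carrier \<Gamma>. Q (\<delta> \<otimes>\<^bsub>\<Gamma>\<^esub> \<gamma>)"
  show "\<forall>\<gamma>\<in>carrier \<Gamma>. Q \<gamma>"
  proof
    fix \<gamma> assume g: "\<gamma> \<in> carrier \<Gamma>"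
    have "Q (\<delta> \<otimes>\<^bsub>\<Gamma>\<^esub> (inv\<^bsub>\<Gamma>\<^esub> \<delta> \<otimes>\<^bsub>\<Gamma>\<^esub> \<gamma>))" using H g assms by simp
    then show "Q \<gamma>" using g assms by (simp add: G.m_assoc[symmetric])
  qed
qed (use assms in simp)

lemma shift_ex1:
  assumes "\<delta> \<in> G1"
  shows "(\<exists>\<gamma>\<in>G1. Q (\<delta> \<otimes>\<^bsub>\<Gamma>\<^esub> \<gamma>)) \<longleftrightarrow> (\<exists>\<gamma>\<in>G1. Q \<gamma>)"
proof
  assume "\<exists>\<gamma>\<in>G1. Q (\<delta> \<otimes>\<^bsub>\<Gamma>\<^esub> \<gamma>)"
  then show "\<exists>\<gamma>\<in>G1. Q \<gamma>" using assms G1_mult by blast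
next
  assume "\<exists>\<gamma>\<in>G1. Q \<gamma>"
  then obtain \<gamma> where g: "\<gamma> \<in> G1" "Q \<gamma>" by blast
  have gc: "\<gamma> \<in> carrier \<Gamma>" "\<delta> \<in> carrier \<Gamma>" using g assms G1_sub by auto
  have "inv\<^bsub>\<Gamma>\<^esub> \<delta> \<otimes>\<^bsub>\<Gamma>\<^esub> \<gamma> \<in> G1" using G1_mult G1_inv g assms by blast
  moreover have "\<delta> \<otimes>\<^bsub>\<Gamma>\<^esub> (inv\<^bsub>\<Gamma>\<^esub> \<delta> \<otimes>\<^bsub>\<Gamma>\<^esub> \<gamma>) = \<gamma>" using gc by (simp add: G.m_assoc[symmetric])
  ultimately show "\<exists>\<gamma>\<in>G1. Q (\<delta> \<otimes>\<^bsub>\<Gamma>\<^esub> \<gamma>)" using g by metis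
qed

lemma disj0:
  assumes g: "g \<in> carrier \<Gamma>" and h: "h \<in> carrier \<Gamma>" and r: "rel g h" and ne: "h \<noteq> g"
  shows "AE x in M. \<not> (x \<in> A \<and> a g x \<in> A)"
proof -
  define k where "k = inv\<^bsub>\<Gamma>\<^esub> h \<otimes>\<^bsub>\<Gamma>\<^esub> g"
  have k: "k \<in> carrier \<Gamma>" using g h by (simp add: k_def)
  have hk: "h \<otimes>\<^bsub>\<Gamma>\<^esub> k = g" using g h by (simp add: k_def G.m_assoc[symmetric])
  have k1: "k \<noteq> \<one>\<^bsub>\<Gamma>\<^esub>" using hk ne h by auto
  have e1: "AE y in M. a k y \<noteq> y" using fr k k1 by (simp add: essentially_free_def)
  have e2: "AE x in M. a k (a h x) \<noteq> a h x" using ae_mp[OF amp[OF h] e1] .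
  have e3: "AE x in M. a g x = a k (a h x)" using acomp[OF h k] hk by simp
  have e4: "AE x in M. a h (D x) = D (a g x)" using r by (simp add: rel_def)
  show ?thesis using e2 e3 e4 by eventually_elim (use Afix in auto)
qed

lemma disj:
  assumes t1: "t1 \<in> G0" and t2: "t2 \<in> G0" and n: "inv\<^bsub>\<Gamma>\<^esub> t1 \<otimes>\<^bsub>\<Gamma>\<^esub> t2 \<notin> G1"
  shows "AE x in M. \<not> (a t1 x \<in> A \<and> a t2 x \<in> A)"
proof -
  define g where "g = inv\<^bsub>\<Gamma>\<^esub> t1 \<otimes>\<^bsub>\<Gamma>\<^esub> t2"
  have gG0: "g \<in> G0" using t1 t2 G0_inv G0_mult by (simp add: g_def)
  then obtain h where h: "h \<in> carrier \<Gamma>" "rel g h" and g: "g \<in> carrier \<Gamma>" by (auto simp: G0_def)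
  have "h \<noteq> g" using h n g by (auto simp: G1_def g_def)
  then have e1: "AE x in M. \<not> (x \<in> A \<and> a g x \<in> A)" using disj0 g h by blast
  have tc: "t1 \<in> carrier \<Gamma>" "t2 \<in> carrier \<Gamma>" using t1 t2 G0_sub by auto
  have e2: "AE x in M. \<not> (a t1 x \<in> A \<and> a g (a t1 x) \<in> A)" using ae_mp[OF amp[OF tc(1)] e1] .
  have tg: "t1 \<otimes>\<^bsub>\<Gamma>\<^esub> g = t2" using tc by (simp add: g_def G.m_assoc[symmetric])
  have e3: "AE x in M. a t2 x = a g (a t1 x)" using acomp[OF tc(1) g] tg by simp
  show ?thesis using e2 e3 by eventually_elim auto
qed

definition sep :: "'g set \<Rightarrow> bool" where
  "sep T \<longleftrightarrow> finite T \<and> T \<subseteq> G0 \<and> (\<forall>t1\<in>T. \<forall>t2\<in>T. t1 \<noteq> t2 \<longrightarrow> inv\<^bsub>\<Gamma>\<^esub> t1 \<otimes>\<^bsub>\<Gamma>\<^esub> t2 \<notin> G1)"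

lemma sep_card: assumes "sep T" shows "card T \<le> nat \<lceil>1 / measure M A\<rceil>"
proof -
  have fT: "finite T" and TG: "T \<subseteq> G0" and Ts: "\<forall>t1\<in>T. \<forall>t2\<in>T. t1 \<noteq> t2 \<longrightarrow> inv\<^bsub>\<Gamma>\<^esub> t1 \<otimes>\<^bsub>\<Gamma>\<^esub> t2 \<notin> G1"
    using assms by (auto simp: sep_def)
  have Tc: "T \<subseteq> carrier \<Gamma>" using TG G0_sub by auto
  define E where "E t = a t -` A \<inter> space M" for t
  have Es: "E t \<in> sets M" if "t \<in> T" for t
    unfolding E_def using ameas[of t] that Tc As by (auto intro: measurable_sets)
  have Em: "emeasure M (E t) = emeasure M A" if "t \<in> T" for t
  proof -
    have "emeasure M (E t) = emeasure (distr M M (a t)) A"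
      unfolding E_def using emeasure_distr[OF ameas[of t] As] that Tc by auto
    also have "\<dots> = emeasure M A" using amp[of t] that Tc by (auto simp: mp_map_def)
    finally show ?thesis .
  qed
  have ae: "AE x in M. \<forall>t1\<in>T. \<forall>t2\<in>T. t1 \<noteq> t2 \<longrightarrow> \<not> (a t1 x \<in> A \<and> a t2 x \<in> A)"
  proof (intro AE_finite_allI[OF fT])
    fix t1 t2 assume "t1 \<in> T" "t2 \<in> T"
    then show "AE x in M. t1 \<noteq> t2 \<longrightarrow> \<not> (a t1 x \<in> A \<and> a t2 x \<in> A)"
      using disj[of t1 t2] Ts TG by (cases "t1 = t2") auto
  qed
  have ae2: "AE x in M. (\<Sum>t\<in>T. indicator (E t) x) \<le> (1::ennreal)"
    using ae
  proof eventually_elim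
    case (elim x)
    show ?case
    proof (cases "\<exists>t0\<in>T. x \<in> E t0")
      case True
      then obtain t0 where t0: "t0 \<in> T" "x \<in> E t0" by blast
      have "(\<Sum>t\<in>T. indicator (E t) x :: ennreal) = indicator (E t0) x + (\<Sum>t\<in>T - {t0}. indicator (E t) x)"
        using t0 fT by (simp add: sum.remove)
      also have "(\<Sum>t\<in>T - {t0}. indicator (E t) x :: ennreal) = 0"
        using elim t0 by (intro sum.neutral) (auto simp: E_def indicator_def split: if_splits)
      finally show ?thesis using t0 by simp
    next
      case False
      then show ?thesis by simp
    qed
  qed
  have "(\<integral>\<^sup>+ x. (\<Sum>t\<in>T. indicator (E t) x) \<partial>M) = (\<Sum>t\<in>T. emeasure M (E t))"
    using Es by (subst nn_integral_sum) (auto)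
  also have "\<dots> = of_nat (card T) * emeasure M A" using Em by simp
  finally have eq: "(\<integral>\<^sup>+ x. (\<Sum>t\<in>T. indicator (E t) x) \<partial>M) = of_nat (card T) * emeasure M A" .
  have "(\<integral>\<^sup>+ x. (\<Sum>t\<in>T. indicator (E t) x) \<partial>M) \<le> (\<integral>\<^sup>+ x. 1 \<partial>M)"
    by (rule nn_integral_mono_AE[OF ae2])
  also have "\<dots> = 1" by (simp add: P.emeasure_space_1)
  finally have le: "of_nat (card T) * emeasure M A \<le> 1" using eq by simp
  have pos: "measure M A > 0" using Apos by (simp add: P.emeasure_eq_measure)
  have "ennreal (real (card T) * measure M A) \<le> 1"
    using le by (simp add: P.emeasure_eq_measure ennreal_mult' ennreal_of_nat_eq_real_of_nat)
  then have "real (card T) * measure M A \<le> 1" by (simp add: ennreal_le_1)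
  then have "real (card T) \<le> 1 / measure M A" using pos by (simp add: field_simps)
  also have "\<dots> \<le> real_of_int \<lceil>1 / measure M A\<rceil>" by (rule le_of_int_ceiling)
  finally have "real_of_int (int (card T)) \<le> real_of_int \<lceil>1 / measure M A\<rceil>" by simp
  then have "int (card T) \<le> \<lceil>1 / measure M A\<rceil>" by (simp only: of_int_le_iff)
  then have "nat (int (card T)) \<le> nat \<lceil>1 / measure M A\<rceil>" by (rule nat_mono)
  then show ?thesis by simp
qed

lemma cover0: "\<exists>T. finite T \<and> T \<subseteq> G0 \<and> (\<forall>\<gamma>\<in>G0. \<exists>t\<in>T. inv\<^bsub>\<Gamma>\<^esub> t \<otimes>\<^bsub>\<Gamma>\<^esub> \<gamma> \<in> G1)"
proof -
  have s0: "sep {}" by (simp add: sep_def)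
  have bd: "\<forall>y. sep y \<longrightarrow> card y < Suc (nat \<lceil>1 / measure M A\<rceil>)"
    using sep_card by (simp add: less_Suc_eq_le)
  obtain T where T: "sep T" and mx0: "\<forall>y. sep y \<longrightarrow> card y \<le> card T"
    using ex_has_greatest_nat[of sep "{}" card, OF s0 bd] by blast
  have mx: "\<And>T'. sep T' \<Longrightarrow> card T' \<le> card T" using mx0 by blast
  have fT: "finite T" and TG: "T \<subseteq> G0" and Ts: "\<forall>t1\<in>T. \<forall>t2\<in>T. t1 \<noteq> t2 \<longrightarrow> inv\<^bsub>\<Gamma>\<^esub> t1 \<otimes>\<^bsub>\<Gamma>\<^esub> t2 \<notin> G1"
    using T by (auto simp: sep_def)
  have "\<exists>t\<in>T. inv\<^bsub>\<Gamma>\<^esub> t \<otimes>\<^bsub>\<Gamma>\<^esub> \<gamma> \<in> G1" if g: "\<gamma> \<in> G0" for \<gamma>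
  proof (rule ccontr)
    assume no: "\<not> ?thesis"
    have gc: "\<gamma> \<in> carrier \<Gamma>" using g G0_sub by auto
    have nT: "\<gamma> \<notin> T"
    proof
      assume "\<gamma> \<in> T"
      moreover have "inv\<^bsub>\<Gamma>\<^esub> \<gamma> \<otimes>\<^bsub>\<Gamma>\<^esub> \<gamma> \<in> G1" using gc G1_one by simp
      ultimately show False using no by blast
    qed
    have "inv\<^bsub>\<Gamma>\<^esub> \<gamma> \<otimes>\<^bsub>\<Gamma>\<^esub> t \<notin> G1" if t: "t \<in> T" for t
    proof
      assume "inv\<^bsub>\<Gamma>\<^esub> \<gamma> \<otimes>\<^bsub>\<Gamma>\<^esub> t \<in> G1"
      then have "inv\<^bsub>\<Gamma>\<^esub> (inv\<^bsub>\<Gamma>\<^esub> \<gamma> \<otimes>\<^bsub>\<Gamma>\<^esub> t) \<in> G1" by (rule G1_inv)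
      moreover have "t \<in> carrier \<Gamma>" using t TG G0_sub by auto
      ultimately have "inv\<^bsub>\<Gamma>\<^esub> t \<otimes>\<^bsub>\<Gamma>\<^esub> \<gamma> \<in> G1" using gc by (simp add: G.inv_mult_group)
      then show False using no t by blast
    qed
    then have "sep (insert \<gamma> T)" using fT TG Ts g no unfolding sep_def by auto
    then have "card (insert \<gamma> T) \<le> card T" by (rule mx)
    then show False using nT fT by simp
  qed
  then show ?thesis using fT TG by blast
qed

lemma coverR: "\<exists>R. finite R \<and> R \<subseteq> carrier \<Gamma> \<and> (\<forall>\<gamma>\<in>carrier \<Gamma>. \<exists>r\<in>R. \<exists>g\<in>G0. \<gamma> = r \<otimes>\<^bsub>\<Gamma>\<^esub> g)"
proof -
  have "finite (rcosets\<^bsub>\<Gamma>\<^esub> (comm_left \<Gamma> M a D))" using com unfolding in_commensurator_def by (elim conjE)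
  then have fin: "finite (rcosets\<^bsub>\<Gamma>\<^esub> G0)" unfolding G0_eq .
  have sub: "rcosets\<^bsub>\<Gamma>\<^esub> G0 \<subseteq> (\<lambda>x. G0 #>\<^bsub>\<Gamma>\<^esub> x) ` carrier \<Gamma>" unfolding RCOSETS_def by blast
  obtain C where C0: "C \<subseteq> carrier \<Gamma> \<and> finite C \<and> rcosets\<^bsub>\<Gamma>\<^esub> G0 = (\<lambda>x. G0 #>\<^bsub>\<Gamma>\<^esub> x) ` C"
    using finite_subset_image[OF fin sub] by (elim exE) (erule that)
  note C = C0[THEN conjunct1] C0[THEN conjunct2, THEN conjunct1] C0[THEN conjunct2, THEN conjunct2]
  have c1: "\<exists>r\<in>m_inv \<Gamma> ` C. \<exists>g\<in>G0. \<gamma> = r \<otimes>\<^bsub>\<Gamma>\<^esub> g" if g: "\<gamma> \<in> carrier \<Gamma>" for \<gamma>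
  proof -
    have ig: "inv\<^bsub>\<Gamma>\<^esub> \<gamma> \<in> carrier \<Gamma>" using g by simp
    have "G0 #>\<^bsub>\<Gamma>\<^esub> inv\<^bsub>\<Gamma>\<^esub> \<gamma> \<in> rcosets\<^bsub>\<Gamma>\<^esub> G0" using ig unfolding RCOSETS_def by blast
    then have "G0 #>\<^bsub>\<Gamma>\<^esub> inv\<^bsub>\<Gamma>\<^esub> \<gamma> \<in> (\<lambda>x. G0 #>\<^bsub>\<Gamma>\<^esub> x) ` C" unfolding C(3) .
    then obtain c where c: "c \<in> C" "G0 #>\<^bsub>\<Gamma>\<^esub> inv\<^bsub>\<Gamma>\<^esub> \<gamma> = G0 #>\<^bsub>\<Gamma>\<^esub> c" by blast
    have "inv\<^bsub>\<Gamma>\<^esub> \<gamma> = \<one>\<^bsub>\<Gamma>\<^esub> \<otimes>\<^bsub>\<Gamma>\<^esub> inv\<^bsub>\<Gamma>\<^esub> \<gamma>" using ig by simp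
    then have "inv\<^bsub>\<Gamma>\<^esub> \<gamma> \<in> G0 #>\<^bsub>\<Gamma>\<^esub> inv\<^bsub>\<Gamma>\<^esub> \<gamma>" using G0_one unfolding r_coset_def by blast
    then have "inv\<^bsub>\<Gamma>\<^esub> \<gamma> \<in> G0 #>\<^bsub>\<Gamma>\<^esub> c" unfolding c(2) .
    then obtain h where h: "h \<in> G0" "inv\<^bsub>\<Gamma>\<^esub> \<gamma> = h \<otimes>\<^bsub>\<Gamma>\<^esub> c" unfolding r_coset_def by blast
    have cc: "c \<in> carrier \<Gamma>" "h \<in> carrier \<Gamma>" using c(1) C(1) h(1) G0_sub by auto
    have "\<gamma> = inv\<^bsub>\<Gamma>\<^esub> (inv\<^bsub>\<Gamma>\<^esub> \<gamma>)" using g by simp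
    also have "\<dots> = inv\<^bsub>\<Gamma>\<^esub> (h \<otimes>\<^bsub>\<Gamma>\<^esub> c)" using h(2) by simp
    also have "\<dots> = inv\<^bsub>\<Gamma>\<^esub> c \<otimes>\<^bsub>\<Gamma>\<^esub> inv\<^bsub>\<Gamma>\<^esub> h" using cc by (simp add: G.inv_mult_group)
    finally have "\<gamma> = inv\<^bsub>\<Gamma>\<^esub> c \<otimes>\<^bsub>\<Gamma>\<^esub> inv\<^bsub>\<Gamma>\<^esub> h" .
    moreover have "inv\<^bsub>\<Gamma>\<^esub> c \<in> m_inv \<Gamma> ` C" using c(1) by (rule imageI)
    moreover have "inv\<^bsub>\<Gamma>\<^esub> h \<in> G0" using h(1) by (rule G0_inv)
    ultimately show ?thesis by blast
  qed
  have c2: "m_inv \<Gamma> ` C \<subseteq> carrier \<Gamma>" using C(1) by auto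
  show ?thesis
  proof (rule exI[of _ "m_inv \<Gamma> ` C"], intro conjI)
    show "finite (m_inv \<Gamma> ` C)" using C(2) by simp
    show "m_inv \<Gamma> ` C \<subseteq> carrier \<Gamma>" by (rule c2)
    show "\<forall>\<gamma>\<in>carrier \<Gamma>. \<exists>r\<in>m_inv \<Gamma> ` C. \<exists>g\<in>G0. \<gamma> = r \<otimes>\<^bsub>\<Gamma>\<^esub> g" by (rule ballI, rule c1)
  qed
qed

lemma coverK: "\<exists>K. finite K \<and> K \<subseteq> carrier \<Gamma> \<and> (\<forall>\<gamma>\<in>carrier \<Gamma>. \<exists>k\<in>K. \<exists>h\<in>G1. \<gamma> = k \<otimes>\<^bsub>\<Gamma>\<^esub> h)"
proof -
  obtain R where R: "finite R" "R \<subseteq> carrier \<Gamma>" "\<forall>\<gamma>\<in>carrier \<Gamma>. \<exists>r\<in>R. \<exists>g\<in>G0. \<gamma> = r \<otimes>\<^bsub>\<Gamma>\<^esub> g"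
    using coverR by blast
  obtain T where T: "finite T" "T \<subseteq> G0" "\<forall>\<gamma>\<in>G0. \<exists>t\<in>T. inv\<^bsub>\<Gamma>\<^esub> t \<otimes>\<^bsub>\<Gamma>\<^esub> \<gamma> \<in> G1"
    using cover0 by blast
  let ?K = "(\<lambda>(r, t). r \<otimes>\<^bsub>\<Gamma>\<^esub> t) ` (R \<times> T)"
  have c1: "\<exists>k\<in>?K. \<exists>h\<in>G1. \<gamma> = k \<otimes>\<^bsub>\<Gamma>\<^esub> h" if \<gamma>: "\<gamma> \<in> carrier \<Gamma>" for \<gamma>
  proof -
    obtain r g where rg: "r \<in> R" "g \<in> G0" "\<gamma> = r \<otimes>\<^bsub>\<Gamma>\<^esub> g" using R \<gamma> by blast
    obtain t where t: "t \<in> T" "inv\<^bsub>\<Gamma>\<^esub> t \<otimes>\<^bsub>\<Gamma>\<^esub> g \<in> G1" using T rg by blast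
    have c: "r \<in> carrier \<Gamma>" "g \<in> carrier \<Gamma>" "t \<in> carrier \<Gamma>" using rg t R T G0_sub by auto
    have "\<gamma> = (r \<otimes>\<^bsub>\<Gamma>\<^esub> t) \<otimes>\<^bsub>\<Gamma>\<^esub> (inv\<^bsub>\<Gamma>\<^esub> t \<otimes>\<^bsub>\<Gamma>\<^esub> g)"
      using c rg by (simp add: G.m_assoc G.m_assoc[symmetric, of t])
    moreover have "r \<otimes>\<^bsub>\<Gamma>\<^esub> t \<in> ?K" using rg t by (intro image_eqI[where x="(r,t)"]) auto
    ultimately show ?thesis using t(2) by (intro bexI[of _ "r \<otimes>\<^bsub>\<Gamma>\<^esub> t"] bexI[of _ "inv\<^bsub>\<Gamma>\<^esub> t \<otimes>\<^bsub>\<Gamma>\<^esub> g"])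
  qed
  have c2: "?K \<subseteq> carrier \<Gamma>"
  proof
    fix k assume "k \<in> ?K"
    then obtain r t where rt: "r \<in> R" "t \<in> T" "k = r \<otimes>\<^bsub>\<Gamma>\<^esub> t" by auto
    have "r \<in> carrier \<Gamma>" "t \<in> carrier \<Gamma>" using rt R(2) T(2) G0_sub by auto
    then show "k \<in> carrier \<Gamma>" using rt by simp
  qed
  have c3: "finite ?K" using R(1) T(1) by simp
  show ?thesis
  proof (rule exI[of _ ?K], intro conjI)
    show "finite ?K" by (rule c3)
    show "?K \<subseteq> carrier \<Gamma>" by (rule c2)
    show "\<forall>\<gamma>\<in>carrier \<Gamma>. \<exists>k\<in>?K. \<exists>h\<in>G1. \<gamma> = k \<otimes>\<^bsub>\<Gamma>\<^esub> h" by (rule ballI, rule c1)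
  qed
qed

lemma split_pos:
  assumes U: "U \<in> sets M" and "finite K" and "K \<subseteq> carrier \<Gamma>"
  shows "\<exists>P. P \<in> sets M \<and> emeasure M P > 0 \<and> (\<forall>k\<in>K. P \<subseteq> a k -` U \<or> P \<inter> a k -` U = {})"
  using assms(2,3)
proof (induction K rule: finite_induct)
  case empty
  show ?case by (intro exI[of _ "space M"]) (simp add: P.emeasure_space_1)
next
  case (insert k K)
  then obtain P where P: "P \<in> sets M" "emeasure M P > 0" "\<forall>k\<in>K. P \<subseteq> a k -` U \<or> P \<inter> a k -` U = {}"
    by auto
  have k: "k \<in> carrier \<Gamma>" using insert by auto
  define P1 where "P1 = P \<inter> (a k -` U \<inter> space M)"
  define P2 where "P2 = P - (a k -` U \<inter> space M)"
  have ks: "a k -` U \<inter> space M \<in> sets M" using measurable_sets[OF ameas[OF k] U] .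
  have s: "P1 \<in> sets M" "P2 \<in> sets M" using P(1) ks by (auto simp: P1_def P2_def)
  have un: "P1 \<union> P2 = P" "P1 \<inter> P2 = {}" by (auto simp: P1_def P2_def)
  have sum: "emeasure M P1 + emeasure M P2 = emeasure M P"
    using plus_emeasure[OF s un(2)] un(1) by simp
  have Psp: "P \<subseteq> space M" using P(1) by (rule sets.sets_into_space)
  show ?case
  proof (cases "emeasure M P1 > 0")
    case True
    show ?thesis
      by (rule exI[of _ P1]) (use True s P Psp in \<open>auto simp: P1_def\<close>)
  next
    case False
    then have "emeasure M P1 = 0" by (simp add: not_gr_zero)
    then have "emeasure M P2 > 0" using sum P(2) by simp
    then show ?thesis
      by (intro exI[of _ P2]) (use s P Psp in \<open>auto simp: P2_def\<close>)
  qed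
qed

lemma erg:
  assumes U: "U \<in> sets M" and inv: "\<forall>h\<in>G1. AE x in M. (a h x \<in> U \<longleftrightarrow> x \<in> U)"
  shows "measure M U = 0 \<or> measure M U = 1"
proof -
  obtain K where K: "finite K" "K \<subseteq> carrier \<Gamma>" "\<forall>\<gamma>\<in>carrier \<Gamma>. \<exists>k\<in>K. \<exists>h\<in>G1. \<gamma> = k \<otimes>\<^bsub>\<Gamma>\<^esub> h"
    using coverK by (elim exE conjE) (rule that; assumption)
  interpret PP: prob_space "M \<Otimes>\<^sub>M M" by (intro prob_space_pair ps)
  define V where "V = {z \<in> space (M \<Otimes>\<^sub>M M). \<forall>\<gamma>\<in>carrier \<Gamma>. (a \<gamma> (fst z) \<in> U \<longleftrightarrow> a \<gamma> (snd z) \<in> U)}"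
  have Vs: "V \<in> sets (M \<Otimes>\<^sub>M M)"
  proof -
    have W: "{z \<in> space (M \<Otimes>\<^sub>M M). \<not> (a \<gamma> (fst z) \<in> U \<longleftrightarrow> a \<gamma> (snd z) \<in> U)} \<in> sets (M \<Otimes>\<^sub>M M)"
      if "\<gamma> \<in> carrier \<Gamma>" for \<gamma>
    proof -
      have [measurable]: "a \<gamma> \<in> M \<rightarrow>\<^sub>M M" using ameas that .
      have [measurable]: "U \<in> sets M" by (rule U)
      show ?thesis by measurable
    qed
    have "V = space (M \<Otimes>\<^sub>M M) - (\<Union>\<gamma>\<in>carrier \<Gamma>. {z \<in> space (M \<Otimes>\<^sub>M M). \<not> (a \<gamma> (fst z) \<in> U \<longleftrightarrow> a \<gamma> (snd z) \<in> U)})"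
      unfolding V_def by blast
    also have "\<dots> \<in> sets (M \<Otimes>\<^sub>M M)"
      using W cnt by (intro sets.Diff sets.top sets.countable_UN'') auto
    finally show ?thesis .
  qed
  have Vinv: "\<forall>\<delta>\<in>carrier \<Gamma>. AE z in M \<Otimes>\<^sub>M M. ((\<lambda>g (x, y). (a g x, a g y)) \<delta> z \<in> V \<longleftrightarrow> z \<in> V)"
  proof
    fix \<delta> assume d: "\<delta> \<in> carrier \<Gamma>"
    have e: "AE x in M. \<forall>\<gamma>\<in>carrier \<Gamma>. a (\<delta> \<otimes>\<^bsub>\<Gamma>\<^esub> \<gamma>) x = a \<gamma> (a \<delta> x)"
      using acomp d cnt by (subst AE_ball_countable) auto
    have e1: "AE z in M \<Otimes>\<^sub>M M. \<forall>\<gamma>\<in>carrier \<Gamma>. a (\<delta> \<otimes>\<^bsub>\<Gamma>\<^esub> \<gamma>) (fst z) = a \<gamma> (a \<delta> (fst z))"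
      by (rule ae_fst[OF ps e])
    have e2: "AE z in M \<Otimes>\<^sub>M M. \<forall>\<gamma>\<in>carrier \<Gamma>. a (\<delta> \<otimes>\<^bsub>\<Gamma>\<^esub> \<gamma>) (snd z) = a \<gamma> (a \<delta> (snd z))"
      by (rule ae_snd[OF ps e])
    show "AE z in M \<Otimes>\<^sub>M M. ((\<lambda>g (x, y). (a g x, a g y)) \<delta> z \<in> V \<longleftrightarrow> z \<in> V)"
      using e1 e2 AE_space
    proof eventually_elim
      case (elim z)
      obtain x y where z: "z = (x, y)" by (cases z)
      have xy: "x \<in> space M" "y \<in> space M" using elim z by (auto simp: space_pair_measure)
      have sp: "(a \<delta> x, a \<delta> y) \<in> space (M \<Otimes>\<^sub>M M)"
        using measurable_space[OF ameas[OF d]] xy by (auto simp: space_pair_measure)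
      have "(a \<delta> x, a \<delta> y) \<in> V \<longleftrightarrow> (\<forall>\<gamma>\<in>carrier \<Gamma>. (a \<gamma> (a \<delta> x) \<in> U \<longleftrightarrow> a \<gamma> (a \<delta> y) \<in> U))"
        using sp by (simp add: V_def)
      also have "\<dots> \<longleftrightarrow> (\<forall>\<gamma>\<in>carrier \<Gamma>. (a (\<delta> \<otimes>\<^bsub>\<Gamma>\<^esub> \<gamma>) x \<in> U \<longleftrightarrow> a (\<delta> \<otimes>\<^bsub>\<Gamma>\<^esub> \<gamma>) y \<in> U))"
        using elim z by auto
      also have "\<dots> \<longleftrightarrow> (\<forall>\<gamma>\<in>carrier \<Gamma>. (a \<gamma> x \<in> U \<longleftrightarrow> a \<gamma> y \<in> U))"
        by (rule shift_all[OF d])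
      also have "\<dots> \<longleftrightarrow> (x, y) \<in> V" using elim z by (simp add: V_def)
      finally show ?case using z by simp
    qed
  qed
  have ergV: "emeasure (M \<Otimes>\<^sub>M M) V = 0 \<or> emeasure (M \<Otimes>\<^sub>M M) V = 1"
  proof -
    have "ergodic \<Gamma> (M \<Otimes>\<^sub>M M) (\<lambda>g (x, y). (a g x, a g y))" using wm by (simp add: weakly_mixing_def)
    then show ?thesis using Vs Vinv unfolding ergodic_def by blast
  qed
  obtain P where P: "P \<in> sets M" "emeasure M P > 0" "\<forall>k\<in>K. P \<subseteq> a k -` U \<or> P \<inter> a k -` U = {}"
    using split_pos[OF U K(1) K(2)] by (elim exE conjE) (rule that; assumption)
  define Q where "Q x \<longleftrightarrow> (\<forall>k\<in>K. \<forall>h\<in>G1. (a (k \<otimes>\<^bsub>\<Gamma>\<^esub> h) x \<in> U \<longleftrightarrow> a k x \<in> U))" for x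
  have cG1: "countable G1" using countable_subset[OF G1_sub cnt] .
  have aeQ: "AE x in M. Q x" unfolding Q_def
  proof (intro AE_finite_allI[OF K(1)])
    fix k assume k: "k \<in> K"
    then have kc: "k \<in> carrier \<Gamma>" using K(2) by auto
    show "AE x in M. \<forall>h\<in>G1. (a (k \<otimes>\<^bsub>\<Gamma>\<^esub> h) x \<in> U \<longleftrightarrow> a k x \<in> U)"
    proof (subst AE_ball_countable[OF cG1], intro ballI)
      fix h assume h: "h \<in> G1"
      then have hc: "h \<in> carrier \<Gamma>" using G1_sub by auto
      have e1: "AE x in M. a (k \<otimes>\<^bsub>\<Gamma>\<^esub> h) x = a h (a k x)" by (rule acomp[OF kc hc])
      have e2: "AE x in M. (a h (a k x) \<in> U \<longleftrightarrow> a k x \<in> U)"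
        using ae_mp[OF amp[OF kc], of "\<lambda>y. a h y \<in> U \<longleftrightarrow> y \<in> U"] inv h by simp
      show "AE x in M. (a (k \<otimes>\<^bsub>\<Gamma>\<^esub> h) x \<in> U \<longleftrightarrow> a k x \<in> U)" using e1 e2 by eventually_elim simp
    qed
  qed
  have aePV: "AE z in M \<Otimes>\<^sub>M M. z \<in> P \<times> P \<longrightarrow> z \<in> V"
    using ae_fst[OF ps aeQ] ae_snd[OF ps aeQ] AE_space
  proof eventually_elim
    case (elim z)
    obtain x y where z: "z = (x, y)" by (cases z)
    show ?case
    proof
      assume zP: "z \<in> P \<times> P"
      have "a \<gamma> x \<in> U \<longleftrightarrow> a \<gamma> y \<in> U" if g: "\<gamma> \<in> carrier \<Gamma>" for \<gamma>
      proof -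
        obtain k h where kh: "k \<in> K" "h \<in> G1" "\<gamma> = k \<otimes>\<^bsub>\<Gamma>\<^esub> h" using K(3) g by blast
        have "a \<gamma> x \<in> U \<longleftrightarrow> a k x \<in> U" using elim(1) z kh by (simp add: Q_def)
        also have "\<dots> \<longleftrightarrow> a k y \<in> U" using P(3) kh(1) zP z by blast
        also have "\<dots> \<longleftrightarrow> a \<gamma> y \<in> U" using elim(2) z kh by (simp add: Q_def)
        finally show ?thesis .
      qed
      then show "z \<in> V" using elim(3) z by (simp add: V_def)
    qed
  qed
  have "emeasure (M \<Otimes>\<^sub>M M) (P \<times> P) \<le> emeasure (M \<Otimes>\<^sub>M M) V"
    by (rule emeasure_mono_AE[OF aePV Vs])
  moreover have "emeasure (M \<Otimes>\<^sub>M M) (P \<times> P) = emeasure M P * emeasure M P"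
    using P(1) by (simp add: P.emeasure_pair_measure_Times)
  moreover have "emeasure M P * emeasure M P > 0" using P(2) by (simp add: ennreal_zero_less_mult_iff)
  ultimately have "emeasure (M \<Otimes>\<^sub>M M) V \<noteq> 0" by auto
  then have V1: "emeasure (M \<Otimes>\<^sub>M M) V = 1" using ergV by auto
  have aeV: "AE z in M \<Otimes>\<^sub>M M. z \<in> V"
    using PP.AE_in_set_eq_1[OF Vs] V1 by (simp add: PP.emeasure_eq_measure)
  have ae1: "AE z in M \<Otimes>\<^sub>M M. (fst z \<in> U \<longleftrightarrow> snd z \<in> U)"
    using aeV ae_fst[OF ps a1] ae_snd[OF ps a1]
  proof eventually_elim
    case (elim z)
    have "a \<one>\<^bsub>\<Gamma>\<^esub> (fst z) \<in> U \<longleftrightarrow> a \<one>\<^bsub>\<Gamma>\<^esub> (snd z) \<in> U"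
      using elim(1) G.one_closed unfolding V_def by blast
    then show ?case using elim by simp
  qed
  have "emeasure (M \<Otimes>\<^sub>M M) (U \<times> (space M - U)) \<le> emeasure (M \<Otimes>\<^sub>M M) {}"
    by (rule emeasure_mono_AE) (use ae1 in \<open>eventually_elim, auto\<close>)
  then have "emeasure (M \<Otimes>\<^sub>M M) (U \<times> (space M - U)) = 0" by simp
  then have "emeasure M U * emeasure M (space M - U) = 0"
    using U by (simp add: P.emeasure_pair_measure_Times)
  then have "ennreal (measure M U * measure M (space M - U)) = 0"
    by (simp add: P.emeasure_eq_measure ennreal_mult')
  then have "measure M U = 0 \<or> measure M (space M - U) = 0" by simp
  then show ?thesis using P.prob_compl[OF U] by auto
qed

lemma final: "AE x in M. D x = x"
proof -
  define U where "U = (\<Union>g\<in>G1. a g -` A \<inter> space M)"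
  have cG1: "countable G1" using countable_subset[OF G1_sub cnt] .
  have Us: "U \<in> sets M" unfolding U_def
    using cG1 G1_sub by (intro sets.countable_UN'') (auto intro: measurable_sets[OF ameas As])
  have Uinv: "\<forall>h\<in>G1. AE x in M. (a h x \<in> U \<longleftrightarrow> x \<in> U)"
  proof
    fix h assume h: "h \<in> G1"
    then have hc: "h \<in> carrier \<Gamma>" using G1_sub by auto
    have e: "AE x in M. \<forall>g\<in>G1. a (h \<otimes>\<^bsub>\<Gamma>\<^esub> g) x = a g (a h x)"
      using acomp hc G1_sub cG1 by (subst AE_ball_countable) auto
    show "AE x in M. (a h x \<in> U \<longleftrightarrow> x \<in> U)" using e AE_space
    proof eventually_elim
      case (elim x)
      have hx: "a h x \<in> space M" using measurable_space[OF ameas[OF hc]] elim by auto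
      have "a h x \<in> U \<longleftrightarrow> (\<exists>g\<in>G1. a g (a h x) \<in> A)" using hx unfolding U_def by auto
      also have "\<dots> \<longleftrightarrow> (\<exists>g\<in>G1. a (h \<otimes>\<^bsub>\<Gamma>\<^esub> g) x \<in> A)" using elim by auto
      also have "\<dots> \<longleftrightarrow> (\<exists>g\<in>G1. a g x \<in> A)" by (rule shift_ex1[OF h])
      also have "\<dots> \<longleftrightarrow> x \<in> U" using elim unfolding U_def by auto
      finally show ?case .
    qed
  qed
  have "AE x in M. x \<in> A \<longrightarrow> x \<in> U" using a1 AE_space
  proof eventually_elim
    case (elim x)
    then show ?case using G1_one unfolding U_def by force
  qed
  then have "emeasure M A \<le> emeasure M U" by (rule emeasure_mono_AE[OF _ Us])
  then have "measure M U > 0" using Apos by (simp add: P.emeasure_eq_measure)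
  then have "measure M U = 1" using erg[OF Us Uinv] by auto
  then have aeU: "AE x in M. x \<in> U" using P.AE_in_set_eq_1[OF Us] by simp
  have aeg: "AE x in M. \<forall>g\<in>G1. a g x \<in> A \<longrightarrow> D x = x"
  proof (subst AE_ball_countable[OF cG1], intro ballI)
    fix g assume g: "g \<in> G1"
    then have gc: "g \<in> carrier \<Gamma>" using G1_sub by auto
    have r: "AE x in M. a g (D x) = D (a g x)" using g by (simp add: G1_def rel_def)
    have i1: "AE x in M. a (inv\<^bsub>\<Gamma>\<^esub> g) (a g (D x)) = D x" using ae_mp[OF Dmp ainv1[OF gc]] .
    have i2: "AE x in M. a (inv\<^bsub>\<Gamma>\<^esub> g) (a g x) = x" using ainv1[OF gc] .
    show "AE x in M. a g x \<in> A \<longrightarrow> D x = x" using r i1 i2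
    proof eventually_elim
      case (elim x)
      show ?case
      proof
        assume "a g x \<in> A"
        then have "D (a g x) = a g x" using Afix by blast
        then show "D x = x" using elim by metis
      qed
    qed
  qed
  show ?thesis using aeU aeg by eventually_elim (auto simp: U_def)
qed

end

theorem lemma6p11:
  fixes \<Gamma> :: "'g monoid" and M :: "'a measure" and a :: "'g \<Rightarrow> 'a \<Rightarrow> 'a" and D :: "'a \<Rightarrow> 'a"
  assumes "pmp_right_action \<Gamma> M a"
    and "countable (carrier \<Gamma>)"
    and "essentially_free \<Gamma> M a"
    and "weakly_mixing \<Gamma> M a"
    and "in_commensurator \<Gamma> M a D"
    and "A \<in> sets M" and "emeasure M A > 0"
    and "\<forall>x\<in>A. D x = x"
  shows "AE x in M. D x = x"
proof -
  interpret LL \<Gamma> M a D A by (rule LL.intro) (fact+)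
  show ?thesis by (rule final)
qed

end
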